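(* Let $a=a_0+a_1e_1+a_2e_2+a_3e_3$ and $b=b_0+b_1e_1+b_2e_2+b_3e_3$ be elements of $C\ell_2\setminus\mathbb{R}$ with $a_0=b_0$ and $G(a)=G(b)$. Then the general solution of the linear equation $ax=xb$ (in $x\in C\ell_2$) is $$x=y-\frac{a'ay-a'yb-ayb'+ybb'}{2(|Cim(a)|^2+|Cim(b)|^2)},\qquad y\in C\ell_2\text{ arbitrary}.$$
   Context: $C\ell_2$ is the 4-dimensional real associative algebra with basis $1,e_1,e_2,e_3$ and multiplication $e_1^2=e_2^2=1$, $e_3^2=-1$, $e_1e_2=e_3=-e_2e_1$, $e_1e_3=e_2=-e_3e_1$, $e_3e_2=e_1=-e_2e_3$; $\mathbb{R}$ is identified with $\mathbb{R}\cdot 1$. For $a=a_0+a_1e_1+a_2e_2+a_3e_3$ ($a_i\in\mathbb{R}$): $a'=a_0+a_1e_1+a_2e_2-a_3e_3$, $G(a)=a_1^2+a_2^2-a_3^2$, $|Cim(a)|^2=a_1^2+a_2^2+a_3^2$. *)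

theory Defs
  imports Complex_Main
begin

text \<open>The Clifford algebra Cl_2: elements a0 + a1 e1 + a2 e2 + a3 e3.\<close>
datatype cl2 = Cl2 (c0: real) (c1: real) (c2: real) (c3: real)

instantiation cl2 :: "{zero, one, plus, minus, uminus, times, scaleR}"
begin
definition "0 = Cl2 0 0 0 0"
definition "1 = Cl2 1 0 0 0"
definition "a + b = Cl2 (c0 a + c0 b) (c1 a + c1 b) (c2 a + c2 b) (c3 a + c3 b)"
definition "a - b = Cl2 (c0 a - c0 b) (c1 a - c1 b) (c2 a - c2 b) (c3 a - c3 b)"
definition "- a = Cl2 (- c0 a) (- c1 a) (- c2 a) (- c3 a)"
definition "scaleR r a = Cl2 (r * c0 a) (r * c1 a) (r * c2 a) (r * c3 a)"
text \<open>Multiplication from e1^2 = e2^2 = 1, e3^2 = -1, e1 e2 = e3 = - e2 e1,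
  e1 e3 = e2 = - e3 e1, e3 e2 = e1 = - e2 e3, extended bilinearly.\<close>
definition "a * b = Cl2
   (c0 a * c0 b + c1 a * c1 b + c2 a * c2 b - c3 a * c3 b)
   (c0 a * c1 b + c1 a * c0 b - c2 a * c3 b + c3 a * c2 b)
   (c0 a * c2 b + c2 a * c0 b + c1 a * c3 b - c3 a * c1 b)
   (c0 a * c3 b + c3 a * c0 b + c1 a * c2 b - c2 a * c1 b)"
instance ..
end

definition cl2_of_real :: "real \<Rightarrow> cl2" where
  "cl2_of_real r = Cl2 r 0 0 0"

definition cl2_conj :: "cl2 \<Rightarrow> cl2" where
  "cl2_conj a = Cl2 (c0 a) (c1 a) (c2 a) (- c3 a)"

definition cl2_G :: "cl2 \<Rightarrow> real" where
  "cl2_G a = (c1 a)^2 + (c2 a)^2 - (c3 a)^2"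

definition cl2_Cim_sq :: "cl2 \<Rightarrow> real" where
  "cl2_Cim_sq a = (c1 a)^2 + (c2 a)^2 + (c3 a)^2"

end

theory Submission
  imports Defs
begin

lemma cl2_eqI: "c0 x = c0 y \<Longrightarrow> c1 x = c1 y \<Longrightarrow> c2 x = c2 y \<Longrightarrow> c3 x = c3 y \<Longrightarrow> x = y"
  by (cases x; cases y) auto

lemma fwd0:
  fixes a0 a1 a2 a3 b0 b1 b2 b3 y0 y1 y2 y3 k :: real
  assumes k: "k * (2 * (a1^2+a2^2+a3^2+(b1^2+b2^2+b3^2))) = 1"
    and h0: "a0 = b0" and hG: "a1^2+a2^2-a3^2 = b1^2+b2^2-b3^2"
  defines "a \<equiv> Cl2 a0 a1 a2 a3" and "b \<equiv> Cl2 b0 b1 b2 b3" and "y \<equiv> Cl2 y0 y1 y2 y3"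
  shows "a * (y - k *\<^sub>R
          (cl2_conj a * a * y - cl2_conj a * y * b - a * y * cl2_conj b + y * b * cl2_conj b))
    = (y - k *\<^sub>R
          (cl2_conj a * a * y - cl2_conj a * y * b - a * y * cl2_conj b + y * b * cl2_conj b)) * b"
  unfolding a_def b_def y_def
  apply (rule cl2_eqI)
  apply (simp_all add: times_cl2_def minus_cl2_def plus_cl2_def scaleR_cl2_def cl2_conj_def)
  using k h0 hG by algebra+

lemma fwd:
  fixes a b y :: cl2
  assumes "c0 a = c0 b" and "cl2_G a = cl2_G b" and N: "cl2_Cim_sq a + cl2_Cim_sq b \<noteq> 0"
  shows "a * (y - (1 / (2 * (cl2_Cim_sq a + cl2_Cim_sq b))) *\<^sub>R
          (cl2_conj a * a * y - cl2_conj a * y * b - a * y * cl2_conj b + y * b * cl2_conj b))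
    = (y - (1 / (2 * (cl2_Cim_sq a + cl2_Cim_sq b))) *\<^sub>R
          (cl2_conj a * a * y - cl2_conj a * y * b - a * y * cl2_conj b + y * b * cl2_conj b)) * b"
proof -
  obtain a0 a1 a2 a3 where A: "a = Cl2 a0 a1 a2 a3" by (cases a)
  obtain b0 b1 b2 b3 where B: "b = Cl2 b0 b1 b2 b3" by (cases b)
  obtain y0 y1 y2 y3 where Y: "y = Cl2 y0 y1 y2 y3" by (cases y)
  have k: "(1 / (2 * (cl2_Cim_sq a + cl2_Cim_sq b))) * (2 * (a1^2+a2^2+a3^2+(b1^2+b2^2+b3^2))) = 1"
    using N unfolding A B cl2_Cim_sq_def by simp
  have h0: "a0 = b0" and hG: "a1^2+a2^2-a3^2 = b1^2+b2^2-b3^2" using assms(1,2) unfolding A B cl2_G_def by auto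
  show ?thesis using fwd0[OF k h0 hG] unfolding A B Y .
qed

theorem theorem5p1:
  fixes a b :: cl2
  assumes "a \<notin> range cl2_of_real" and "b \<notin> range cl2_of_real"
    and "c0 a = c0 b" and "cl2_G a = cl2_G b"
  shows "{x. a * x = x * b} =
    {y - (1 / (2 * (cl2_Cim_sq a + cl2_Cim_sq b))) *\<^sub>R
          (cl2_conj a * a * y - cl2_conj a * y * b - a * y * cl2_conj b + y * b * cl2_conj b)
     | y. True}"
proof -
  have Na: "cl2_Cim_sq a > 0"
  proof (rule ccontr)
    assume "\<not> ?thesis"
    hence "c1 a = 0 \<and> c2 a = 0 \<and> c3 a = 0" unfolding cl2_Cim_sq_def
      by (smt (verit) zero_le_power2 power_zero_numeral zero_less_power2)
    hence "a = cl2_of_real (c0 a)" unfolding cl2_of_real_def by (intro cl2_eqI) auto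
    with assms(1) show False by auto
  qed
  have Nb: "cl2_Cim_sq b \<ge> 0" unfolding cl2_Cim_sq_def by simp
  have N: "cl2_Cim_sq a + cl2_Cim_sq b \<noteq> 0" using Na Nb by linarith
  show ?thesis
  proof (rule set_eqI, rule iffI)
    fix x assume "x \<in> {x. a * x = x * b}"
    hence ax: "a * x = x * b" by simp
    obtain a0 a1 a2 a3 where A: "a = Cl2 a0 a1 a2 a3" by (cases a)
    obtain b0 b1 b2 b3 where B: "b = Cl2 b0 b1 b2 b3" by (cases b)
    obtain y0 y1 y2 y3 where Y: "x = Cl2 y0 y1 y2 y3" by (cases x)
    have e: "cl2_conj a * a * x - cl2_conj a * x * b - a * x * cl2_conj b + x * b * cl2_conj b = 0"
    proof -
      have c: "c0 (a*x) = c0 (x*b)" "c1 (a*x) = c1 (x*b)" "c2 (a*x) = c2 (x*b)" "c3 (a*x) = c3 (x*b)"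
        using ax by auto
      show ?thesis using c unfolding A B Y
        apply -
        apply (rule cl2_eqI)
        apply (simp_all add: times_cl2_def minus_cl2_def plus_cl2_def cl2_conj_def zero_cl2_def)
        by algebra+
    qed
    have "x = x - (1 / (2 * (cl2_Cim_sq a + cl2_Cim_sq b))) *\<^sub>R
          (cl2_conj a * a * x - cl2_conj a * x * b - a * x * cl2_conj b + x * b * cl2_conj b)"
      unfolding e by (intro cl2_eqI) (simp_all add: minus_cl2_def scaleR_cl2_def zero_cl2_def)
    thus "x \<in> {y - (1 / (2 * (cl2_Cim_sq a + cl2_Cim_sq b))) *\<^sub>R
          (cl2_conj a * a * y - cl2_conj a * y * b - a * y * cl2_conj b + y * b * cl2_conj b)
     | y. True}" by blast
  next
    fix x assume "x \<in> {y - (1 / (2 * (cl2_Cim_sq a + cl2_Cim_sq b))) *\<^sub>R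
          (cl2_conj a * a * y - cl2_conj a * y * b - a * y * cl2_conj b + y * b * cl2_conj b)
     | y. True}"
    then obtain y where "x = y - (1 / (2 * (cl2_Cim_sq a + cl2_Cim_sq b))) *\<^sub>R
          (cl2_conj a * a * y - cl2_conj a * y * b - a * y * cl2_conj b + y * b * cl2_conj b)" by blast
    thus "x \<in> {x. a * x = x * b}" using fwd[OF assms(3,4) N, of y] by simp
  qed
qed

end
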